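(* Let $\Lambda\subset\mathbb{R}^2$ be a lattice invariant under $\mathrm{diag}(e^a,e^{-a})$ for some $a\neq0$ (so that $\Gamma=\Lambda\rtimes a\mathbb{Z}$ is a lattice in $\mathsf{Solv}$), and let $\Lambda'=\{\underline{\mu}\in\mathbb{R}^2:\underline{\mu}\cdot m\in2\pi\mathbb{Z}\ \forall m\in\Lambda\}$ be its dual lattice. For $\underline{\mu}=(\mu,\mu')\in\Lambda'\setminus\{0\}$ consider the operator $\Delta_{\underline{\mu}}f=-f_{zz}+(\mu^2e^{-2z}+(\mu')^2e^{2z})f$ on $L^2(\mathbb{R})$. Then the first eigenvalue of $\Delta_{\underline{\mu}}$ is at least $2|\mu\mu'|$, and $2|\mu\mu'|\neq0$.
   Context: $\mathsf{Solv}$ is $\mathbb{R}^2\rtimes\mathbb{R}$ with $z\in\mathbb{R}$ acting on $\mathbb{R}^2$ by $\mathrm{diag}(e^z,e^{-z})$, with left-invariant metric $e^{2z}dx^2+e^{-2z}dy^2+dz^2$. The operators $\Delta_{\underline{\mu}}$ are the Fourier components of the Laplacian on functions on $\Gamma\backslash\mathsf{Solv}$ with respect to the $\mathbb{R}^2$-directions. *)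

theory Defs
  imports "HOL-Analysis.Analysis"
begin

definition is_lattice :: "(real \<times> real) set \<Rightarrow> bool" where
  "is_lattice L \<longleftrightarrow> (\<exists>v w. fst v * snd w - snd v * fst w \<noteq> 0 \<and>
      L = {(of_int m * fst v + of_int n * fst w, of_int m * snd v + of_int n * snd w) | m n :: int. True})"

definition diag_exp :: "real \<Rightarrow> real \<times> real \<Rightarrow> real \<times> real" where
  "diag_exp a p = (exp a * fst p, exp (- a) * snd p)"

definition dual_lattice :: "(real \<times> real) set \<Rightarrow> (real \<times> real) set" where
  "dual_lattice L = {u. \<forall>m\<in>L. \<exists>k::int. fst u * fst m + snd u * snd m = 2 * pi * of_int k}"

definition solv_potential :: "real \<Rightarrow> real \<Rightarrow> real \<Rightarrow> real" where
  "solv_potential \<mu> \<mu>' z = \<mu>\<^sup>2 * exp (- 2 * z) + \<mu>'\<^sup>2 * exp (2 * z)"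

definition is_eigenpair :: "real \<Rightarrow> real \<Rightarrow> real \<Rightarrow> (real \<Rightarrow> complex) \<Rightarrow> bool" where
  "is_eigenpair \<mu> \<mu>' lam f \<longleftrightarrow>
     (\<exists>z. f z \<noteq> 0) \<and>
     f \<in> borel_measurable lborel \<and>
     integrable lborel (\<lambda>z. (cmod (f z))\<^sup>2) \<and>
     (\<exists>f'. \<forall>z. (f has_vector_derivative f' z) (at z) \<and>
        (f' has_vector_derivative (complex_of_real (solv_potential \<mu> \<mu>' z - lam) * f z)) (at z))"

end

theory Submission imports Defs begin

lemma interval_bound:
  fixes g :: "real \<Rightarrow> real"
  assumes int: "integrable lborel g" and nn: "\<And>x. g x \<ge> 0"
    and A: "\<And>x. x \<in> {a..b} \<Longrightarrow> g x \<ge> c" and ab: "a \<le> b" and c: "c \<ge> 0"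
  shows "c * (b - a) \<le> integral\<^sup>L lborel g"
proof -
  have "integral\<^sup>L lborel (\<lambda>x. c * indicator {a..b} x) \<le> integral\<^sup>L lborel g"
  proof (rule integral_mono[OF _ int])
    show "integrable lborel (\<lambda>x. c * indicator {a..b} x)"
      by (intro integrable_mult_right) (simp add: integrable_indicator_iff ab)
    show "c * indicator {a..b} x \<le> g x" for x
      using A[of x] nn[of x] by (auto simp: indicator_def)
  qed
  moreover have "integral\<^sup>L lborel (\<lambda>x. c * indicator {a..b} x) = c * (b - a)"
    using ab by simp
  ultimately show ?thesis using ab by simp
qed

lemma small_int_contra:
  fixes t c :: real
  assumes t: "t \<noteq> 0" and c: "c > 0"
    and h: "\<And>n::nat. \<exists>k::int. exp (- (real n * c)) * t = 2 * pi * of_int k"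
  shows False
proof -
  obtain n :: nat where n: "\<bar>t\<bar> / (2 * pi * c) < real n" using reals_Archimedean2 by blast
  obtain k :: int where k: "exp (- (real n * c)) * t = 2 * pi * of_int k" using h by blast
  have "k \<noteq> 0" using k t by auto
  hence "\<bar>of_int k :: real\<bar> \<ge> 1" by linarith
  hence "\<bar>exp (- (real n * c)) * t\<bar> \<ge> 2 * pi" using k pi_gt_zero
    by (simp add: abs_mult)
  hence "exp (- (real n * c)) * \<bar>t\<bar> \<ge> 2 * pi" by (simp add: abs_mult)
  hence "\<bar>t\<bar> \<ge> 2 * pi * exp (real n * c)"
    by (simp add: exp_minus field_simps)
  moreover have "exp (real n * c) \<ge> 1 + real n * c" by (rule exp_ge_add_one_self)
  moreover have "\<bar>t\<bar> < 2 * pi * c * real n" using n c pi_gt_zero by (simp add: field_simps)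
  moreover have "2 * pi * (1 + real n * c) \<le> 2 * pi * exp (real n * c)"
    using calculation(2) pi_gt_zero by simp
  ultimately show False using pi_gt_zero by (simp add: algebra_simps)
qed

lemma no_eigen:
  assumes eig: "is_eigenpair \<mu> \<mu>' lam f"
    and lt: "\<And>z. solv_potential \<mu> \<mu>' z \<ge> lam"
  shows False
proof -
  obtain z0 where z0: "f z0 \<noteq> 0" using eig unfolding is_eigenpair_def by blast
  have int: "integrable lborel (\<lambda>z. (cmod (f z))\<^sup>2)" using eig unfolding is_eigenpair_def by blast
  obtain f' where D1: "\<And>z. (f has_vector_derivative f' z) (at z)"
    and D2: "\<And>z. (f' has_vector_derivative (complex_of_real (solv_potential \<mu> \<mu>' z - lam) * f z)) (at z)"
    using eig unfolding is_eigenpair_def by blast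
  define V where "V z = solv_potential \<mu> \<mu>' z - lam" for z
  define p where "p z = Re (f z)" for z
  define q where "q z = Im (f z)" for z
  define p' where "p' z = Re (f' z)" for z
  define q' where "q' z = Im (f' z)" for z
  define g where "g z = (cmod (f z))\<^sup>2" for z
  define h where "h z = 2 * p z * p' z + 2 * q z * q' z" for z
  have Vnn: "V z \<ge> 0" for z using lt[of z] by (simp add: V_def)
  have gpq: "g z = (p z)\<^sup>2 + (q z)\<^sup>2" for z by (simp add: g_def p_def q_def cmod_power2)
  have gfun: "g = (\<lambda>z. (p z)\<^sup>2 + (q z)\<^sup>2)" using gpq by auto
  have dp: "(p has_real_derivative p' z) (at z)" for z
    unfolding p_def p'_def by (rule has_field_derivative_Re[OF D1])
  have dq: "(q has_real_derivative q' z) (at z)" for z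
    unfolding q_def q'_def by (rule has_field_derivative_Im[OF D1])
  have dp': "(p' has_real_derivative V z * p z) (at z)" for z
    using has_field_derivative_Re[OF D2[of z]] unfolding p'_def p_def V_def by simp
  have dq': "(q' has_real_derivative V z * q z) (at z)" for z
    using has_field_derivative_Im[OF D2[of z]] unfolding q'_def q_def V_def by simp
  have dg: "(g has_real_derivative h z) (at z)" for z
    unfolding gfun h_def
    by (auto intro!: derivative_eq_intros dp dq)
  have dh: "(h has_real_derivative (2 * (p' z)\<^sup>2 + 2 * (q' z)\<^sup>2 + 2 * V z * g z)) (at z)" for z
    unfolding h_def gpq
    by (auto intro!: derivative_eq_intros dp dq dp' dq' simp: power2_eq_square algebra_simps)
  have hmono: "h x \<le> h y" if "x \<le> y" for x y
  proof (rule DERIV_nonneg_imp_nondecreasing[OF that])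
    fix t show "\<exists>y. (h has_real_derivative y) (at t) \<and> 0 \<le> y"
      using dh[of t] Vnn[of t] by (intro exI[of _ "2 * (p' t)\<^sup>2 + 2 * (q' t)\<^sup>2 + 2 * V t * g t"])
        (auto simp: gpq)
  qed
  have gnn: "g x \<ge> 0" for x by (simp add: g_def)
  have g0: "g z0 > 0" using z0 by (simp add: g_def)
  define T where "T = integral\<^sup>L lborel g / g z0 + 1"
  have intg: "integrable lborel g" using int by (simp add: g_def[abs_def])
  have "integral\<^sup>L lborel g \<ge> 0" using gnn by (simp add: integral_nonneg)
  hence "T > 0" unfolding T_def using g0
    by (smt (verit) divide_nonneg_pos)
  show False
  proof (cases "h z0 \<ge> 0")
    case True
    have "g z0 \<le> g x" if "x \<in> {z0..z0+T}" for x
    proof (rule DERIV_nonneg_imp_nondecreasing[of z0 x g])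
      show "z0 \<le> x" using that by simp
      fix t assume "z0 \<le> t" "t \<le> x"
      then show "\<exists>y. (g has_real_derivative y) (at t) \<and> 0 \<le> y"
        using dg[of t] hmono[of z0 t] True by auto
    qed
    from interval_bound[OF intg gnn this, of z0 "z0+T"] have "g z0 * T \<le> integral\<^sup>L lborel g"
      using \<open>T > 0\<close> g0 by simp
    moreover have "g z0 * T = integral\<^sup>L lborel g + g z0" using g0 by (simp add: T_def field_simps)
    ultimately show False using g0 by linarith
  next
    case False
    have "g z0 \<le> g x" if "x \<in> {z0-T..z0}" for x
    proof (rule DERIV_nonpos_imp_nonincreasing[of x z0 g])
      show "x \<le> z0" using that by simp
      fix t assume "x \<le> t" "t \<le> z0"
      then show "\<exists>y. (g has_real_derivative y) (at t) \<and> y \<le> 0"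
        using dg[of t] hmono[of t z0] False by auto
    qed
    from interval_bound[OF intg gnn this, of "z0-T" z0] have "g z0 * T \<le> integral\<^sup>L lborel g"
      using \<open>T > 0\<close> g0 by simp
    moreover have "g z0 * T = integral\<^sup>L lborel g + g z0" using g0 by (simp add: T_def field_simps)
    ultimately show False using g0 by linarith
  qed
qed

lemma potential_ge: "solv_potential \<mu> \<mu>' z \<ge> 2 * \<bar>\<mu> * \<mu>'\<bar>"
proof -
  have e: "exp (- 2 * z) = (exp (- z))\<^sup>2" "exp (2 * z) = (exp z)\<^sup>2"
    by (simp_all add: power2_eq_square flip: exp_add)
  have "0 \<le> (\<bar>\<mu>\<bar> * exp (- z) - \<bar>\<mu>'\<bar> * exp z)\<^sup>2" by simp
  also have "\<dots> = solv_potential \<mu> \<mu>' z - 2 * \<bar>\<mu> * \<mu>'\<bar> * (exp (- z) * exp z)"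
    unfolding solv_potential_def e by (simp add: power2_eq_square algebra_simps abs_mult)
  also have "exp (- z) * exp z = 1" by (simp flip: exp_add)
  finally show ?thesis by simp
qed

lemma dual_closed:
  assumes L: "diag_exp a ` L = L" and u: "u \<in> dual_lattice L"
  shows "diag_exp a u \<in> dual_lattice L" "diag_exp (- a) u \<in> dual_lattice L"
proof -
  show "diag_exp a u \<in> dual_lattice L"
    unfolding dual_lattice_def
  proof (intro CollectI ballI)
    fix m assume "m \<in> L"
    hence "diag_exp a m \<in> L" using L by blast
    then obtain k :: int where "fst u * fst (diag_exp a m) + snd u * snd (diag_exp a m) = 2 * pi * k"
      using u unfolding dual_lattice_def by blast
    thus "\<exists>k::int. fst (diag_exp a u) * fst m + snd (diag_exp a u) * snd m = 2 * pi * k"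
      by (auto simp: diag_exp_def algebra_simps)
  qed
  show "diag_exp (- a) u \<in> dual_lattice L"
    unfolding dual_lattice_def
  proof (intro CollectI ballI)
    fix m assume "m \<in> L"
    then obtain m' where m': "m' \<in> L" "m = diag_exp a m'" using L by blast
    then obtain k :: int where "fst u * fst m' + snd u * snd m' = 2 * pi * k"
      using u unfolding dual_lattice_def by blast
    moreover have "exp (- a) * exp a = 1" "exp a * exp (- a) = 1" by (simp_all flip: exp_add)
    ultimately show "\<exists>k::int. fst (diag_exp (- a) u) * fst m + snd (diag_exp (- a) u) * snd m = 2 * pi * k"
      using m' by (auto simp: diag_exp_def algebra_simps)
  qed
qed

lemma dual_iter:
  assumes cl: "\<And>u. u \<in> D \<Longrightarrow> diag_exp b u \<in> D" and u: "u \<in> D"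
  shows "diag_exp (real n * b) u \<in> D"
proof (induction n)
  case 0 then show ?case using u by (simp add: diag_exp_def)
next
  case (Suc n)
  have "diag_exp (real (Suc n) * b) u = diag_exp b (diag_exp (real n * b) u)"
    by (simp add: diag_exp_def algebra_simps flip: exp_add)
  then show ?case using cl[OF Suc] by simp
qed

theorem lemma7:
  fixes L :: "(real \<times> real) set" and a \<mu> \<mu>' :: real
  assumes "is_lattice L"
    and "a \<noteq> 0"
    and "diag_exp a ` L = L"
    and "(\<mu>, \<mu>') \<in> dual_lattice L"
    and "(\<mu>, \<mu>') \<noteq> (0, 0)"
  shows "(\<forall>lam f. is_eigenpair \<mu> \<mu>' lam f \<longrightarrow> lam \<ge> 2 * \<bar>\<mu> * \<mu>'\<bar>) \<and> 2 * \<bar>\<mu> * \<mu>'\<bar> \<noteq> 0"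
proof
  show "\<forall>lam f. is_eigenpair \<mu> \<mu>' lam f \<longrightarrow> lam \<ge> 2 * \<bar>\<mu> * \<mu>'\<bar>"
  proof (intro allI impI)
    fix lam f assume e: "is_eigenpair \<mu> \<mu>' lam f"
    show "lam \<ge> 2 * \<bar>\<mu> * \<mu>'\<bar>"
    proof (rule ccontr)
      assume "\<not> ?thesis"
      hence "\<And>z. solv_potential \<mu> \<mu>' z \<ge> lam" using potential_ge
        by (meson le_less_trans less_eq_real_def not_le)
      thus False using no_eigen[OF e] by blast
    qed
  qed
next
  let ?D = "dual_lattice L"
  have clp: "\<And>u. u \<in> ?D \<Longrightarrow> diag_exp a u \<in> ?D" and clm: "\<And>u. u \<in> ?D \<Longrightarrow> diag_exp (- a) u \<in> ?D"
    using dual_closed[OF assms(3)] by blast+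
  have clpos: "\<And>u. u \<in> ?D \<Longrightarrow> diag_exp \<bar>a\<bar> u \<in> ?D" and clneg: "\<And>u. u \<in> ?D \<Longrightarrow> diag_exp (- \<bar>a\<bar>) u \<in> ?D"
    using clp clm by (cases "a \<ge> 0"; simp)+
  obtain v w where vw: "fst v * snd w - snd v * fst w \<noteq> 0"
    and Ldef: "L = {(of_int m * fst v + of_int n * fst w, of_int m * snd v + of_int n * snd w) | m n :: int. True}"
    using assms(1) unfolding is_lattice_def by blast
  have vL: "v \<in> L" unfolding Ldef by (rule CollectI, rule exI[of _ 1], rule exI[of _ 0]) simp
  have wL: "w \<in> L" unfolding Ldef by (rule CollectI, rule exI[of _ 0], rule exI[of _ 1]) simp
  have apos: "\<bar>a\<bar> > 0" using assms(2) by simp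
  have "\<mu> \<noteq> 0"
  proof
    assume m0: "\<mu> = 0"
    hence t: "\<mu>' \<noteq> 0" using assms(5) by simp
    obtain m where mL: "m \<in> L" and sm: "snd m \<noteq> 0"
      using vw vL wL by (cases "snd v = 0") auto
    have "\<exists>k::int. exp (- (real n * \<bar>a\<bar>)) * (\<mu>' * snd m) = 2 * pi * of_int k" for n :: nat
    proof -
      have "diag_exp (real n * \<bar>a\<bar>) (\<mu>, \<mu>') \<in> ?D" by (rule dual_iter[OF clpos assms(4)])
      then obtain k :: int where "fst (diag_exp (real n * \<bar>a\<bar>) (\<mu>, \<mu>')) * fst m + snd (diag_exp (real n * \<bar>a\<bar>) (\<mu>, \<mu>')) * snd m = 2 * pi * k"
        using mL unfolding dual_lattice_def by blast
      thus ?thesis using m0 by (auto simp: diag_exp_def algebra_simps)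
    qed
    thus False using small_int_contra[of "\<mu>' * snd m" "\<bar>a\<bar>"] t sm apos by auto
  qed
  moreover have "\<mu>' \<noteq> 0"
  proof
    assume m0: "\<mu>' = 0"
    hence t: "\<mu> \<noteq> 0" using assms(5) by simp
    obtain m where mL: "m \<in> L" and sm: "fst m \<noteq> 0"
      using vw vL wL by (cases "fst v = 0") auto
    have "\<exists>k::int. exp (- (real n * \<bar>a\<bar>)) * (\<mu> * fst m) = 2 * pi * of_int k" for n :: nat
    proof -
      have "diag_exp (real n * (- \<bar>a\<bar>)) (\<mu>, \<mu>') \<in> ?D" by (rule dual_iter[OF clneg assms(4)])
      then obtain k :: int where "fst (diag_exp (real n * (- \<bar>a\<bar>)) (\<mu>, \<mu>')) * fst m + snd (diag_exp (real n * (- \<bar>a\<bar>)) (\<mu>, \<mu>')) * snd m = 2 * pi * k"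
        using mL unfolding dual_lattice_def by blast
      thus ?thesis using m0 by (auto simp: diag_exp_def algebra_simps)
    qed
    thus False using small_int_contra[of "\<mu> * fst m" "\<bar>a\<bar>"] t sm apos by auto
  qed
  ultimately show "2 * \<bar>\<mu> * \<mu>'\<bar> \<noteq> 0" by simp
qed

end
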